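(* Assume the standing assumptions in the context. For $(k,y)\in\mathbb{S}$ and $N\in\mathbb{N}$ let $V((k,y),N)$ be the number of visits of the walk to $(k,y)$ before time $N$. Then for each $K>0$ the family of random variables $V((k,y),N)/\sqrt{N}$, where the walk is started from $\xi(0)=z$, is uniformly integrable, uniformly over $N\in\mathbb{N}$, $z\in\mathbb{S}$, and $(k,y)\in\mathbb{S}$ with $|k|\le K\sqrt{N}$.
   Context: Fix $m\ge1$, $\mathbb{S}=\mathbb{Z}\times\{1,\dots,m\}$. Environment $(P_n,Q_n,R_n)_{n\in\mathbb{Z}}$, nonnegative $m\times m$ with $(P_n+Q_n+R_n)\mathbf{1}=\mathbf{1}$; the walk $\xi$ jumps from $(n,i)$ to $(n+1,j),(n,j),(n-1,j)$ with probabilities $P_n(i,j),R_n(i,j),Q_n(i,j)$. Norm $\|x\|=\max|x_i|$. Standing assumptions: ellipticity ($\bar\varepsilon>0$, $k_0$ with $\|R_n^{k_0}\|\le1-\bar\varepsilon$, $((I-R_n)^{-1}P_n)(i,j)\ge\bar\varepsilon$, $((I-R_n)^{-1}Q_n)(i,j)\ge\bar\varepsilon$); bounded potential ($\zeta_n=\lim_{a\to-\infty}\psi_{n,a}$, $\psi_{a,a}$ any stochastic, $\psi_{n,a}=(I-R_n-Q_n\psi_{n-1,a})^{-1}P_n$, $A_n=(I-R_n-Q_n\zeta_{n-1})^{-1}Q_n$, $|\log\|A_n\cdots A_1\||\le C_P$ for $n\ge1$, $|\log\|A_0\cdots A_{n+1}\||\le C_P$ for $n\le-1$); column vectors $\mathfrak{m}_n$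 with $\mathfrak{m}_n=P_n\mathfrak{m}_{n+1}+R_n\mathfrak{m}_n+Q_n\mathfrak{m}_{n-1}$, $|\mathfrak{m}_{n'}(i')-\mathfrak{m}_{n''}(i'')|\le K'$ for $|n'-n''|\le1$, $\sum_j\mathfrak{m}_n(j)/n\to m$ as $|n|\to\infty$; with $\zeta^-_n$ the unique stochastic sequence with $\zeta^-_n=(I-R_n-P_n\zeta^-_{n+1})^{-1}Q_n$ and $\alpha_n=Q_{n+1}(I-R_n-Q_n\zeta_{n-1})^{-1}$, positive bounded row vectors $\rho_n$ with $\rho_n=\rho_{n-1}P_{n-1}+\rho_nR_n+\rho_{n+1}Q_{n+1}$, $\rho_n=\rho_{n+1}\alpha_n$, $\rho_nP_n(\mathfrak{m}_{n+1}-\zeta^-_{n+1}\mathfrak{m}_n)=\frac1{2m}$; and a constant $a$ with $\lim_{N\to\pm\infty}\frac1{|N|}\sum_{n=0}^{N-1}\rho_n\mathbf{1}=a$. *)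

theory Defs
  imports "HOL-Analysis.Analysis"
begin

text \<open>Matrices are indexed by a finite type 'm with CARD('m) = m; the strip is int \<times> 'm.\<close>

type_synonym 'm mtx = "real^'m^'m"
type_synonym 'm env = "int \<Rightarrow> 'm mtx"

definition vnorm :: "real^'m::finite \<Rightarrow> real" where
  "vnorm x = Max (range (\<lambda>i. \<bar>x $ i\<bar>))"

definition mnorm :: "real^'m::finite^'m \<Rightarrow> real" where
  "mnorm A = Sup ((\<lambda>x. vnorm (A *v x)) ` {x. vnorm x = 1})"

definition one_vec :: "real^'m::finite" where
  "one_vec = (\<chi> i. 1)"

primrec mpow :: "'m::finite mtx \<Rightarrow> nat \<Rightarrow> 'm mtx" where
  "mpow A 0 = mat 1"
| "mpow A (Suc k) = mpow A k ** A"

definition stochastic :: "'m::finite mtx \<Rightarrow> bool" where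
  "stochastic A \<longleftrightarrow> (\<forall>i j. A $ i $ j \<ge> 0) \<and> A *v one_vec = one_vec"

text \<open>psi_seq P Q R S a k = \<psi>_{a+k,a}, started from \<psi>_{a,a} = S a.\<close>
primrec psi_seq :: "'m::finite env \<Rightarrow> 'm env \<Rightarrow> 'm env \<Rightarrow> 'm env \<Rightarrow> int \<Rightarrow> nat \<Rightarrow> 'm mtx" where
  "psi_seq P Q R S a 0 = S a"
| "psi_seq P Q R S a (Suc k) =
     matrix_inv (mat 1 - R (a + int k + 1) - Q (a + int k + 1) ** psi_seq P Q R S a k) ** P (a + int k + 1)"

primrec rprod :: "'m::finite env \<Rightarrow> int \<Rightarrow> nat \<Rightarrow> 'm mtx" where
  "rprod f a 0 = mat 1"
| "rprod f a (Suc k) = rprod f a k ** f (a - int k)"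

definition Amat :: "'m::finite env \<Rightarrow> 'm env \<Rightarrow> 'm env \<Rightarrow> int \<Rightarrow> 'm mtx" where
  "Amat Q R \<zeta> n = matrix_inv (mat 1 - R n - Q n ** \<zeta> (n - 1)) ** Q n"

definition alpha_mat :: "'m::finite env \<Rightarrow> 'm env \<Rightarrow> 'm env \<Rightarrow> int \<Rightarrow> 'm mtx" where
  "alpha_mat Q R \<zeta> n = Q (n + 1) ** matrix_inv (mat 1 - R n - Q n ** \<zeta> (n - 1))"

definition partial_sum :: "(int \<Rightarrow> real) \<Rightarrow> int \<Rightarrow> real" where
  "partial_sum f N = (if N \<ge> 0 then (\<Sum>n\<in>{0..N-1}. f n) else (\<Sum>n\<in>{N..-1}. f n))"

definition trans :: "'m::finite env \<Rightarrow> 'm env \<Rightarrow> 'm env \<Rightarrow> int \<times> 'm \<Rightarrow> int \<times> 'm \<Rightarrow> real" where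
  "trans P Q R s t =
     (let (n, i) = s; (n', j) = t in
       if n' = n + 1 then P n $ i $ j
       else if n' = n then R n $ i $ j
       else if n' = n - 1 then Q n $ i $ j
       else 0)"

text \<open>Trajectories (\<xi>(0),...,\<xi>(N-1)) started at z; all trajectories of positive probability
  stay in the box below, so this finite set carries the full law of the first N positions.\<close>
definition paths :: "(int \<times> 'm::finite) \<Rightarrow> nat \<Rightarrow> (int \<times> 'm) list set" where
  "paths z N = {xs. length xs = N \<and> (N > 0 \<longrightarrow> xs ! 0 = z) \<and>
                    set xs \<subseteq> {fst z - int N .. fst z + int N} \<times> UNIV}"

definition path_prob :: "'m::finite env \<Rightarrow> 'm env \<Rightarrow> 'm env \<Rightarrow> (int \<times> 'm) list \<Rightarrow> real" where
  "path_prob P Q R xs = (\<Prod>i<length xs - 1. trans P Q R (xs ! i) (xs ! (i + 1)))"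

definition visits :: "(int \<times> 'm) \<Rightarrow> (int \<times> 'm) list \<Rightarrow> nat" where
  "visits x xs = length (filter (\<lambda>s. s = x) xs)"

definition exp_visits :: "'m::finite env \<Rightarrow> 'm env \<Rightarrow> 'm env \<Rightarrow> (int \<times> 'm) \<Rightarrow> nat
                          \<Rightarrow> (int \<times> 'm) \<Rightarrow> (real \<Rightarrow> real) \<Rightarrow> real" where
  "exp_visits P Q R z N x g = (\<Sum>xs\<in>paths z N. path_prob P Q R xs * g (real (visits x xs)))"

end

theory Submission
  imports Defs
begin


definition nnm :: "real^'m::finite^'m \<Rightarrow> bool" where
  "nnm M \<longleftrightarrow> (\<forall>i j. M $ i $ j \<ge> 0)"

lemma mv_entry: "(M *v x) $ i = (\<Sum>j\<in>UNIV. M $ i $ j * x $ j)"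
  by (simp add: matrix_vector_mult_def)

lemma mm_entry: "(A ** B) $ i $ j = (\<Sum>l\<in>UNIV. A $ i $ l * B $ l $ j)"
  by (simp add: matrix_matrix_mult_def)

lemma one_vec_entry[simp]: "one_vec $ i = 1"
  by (simp add: one_vec_def)

lemma mpow_nonneg_gen: "nnm M \<Longrightarrow> mpow M s $ i $ j \<ge> 0"
  unfolding nnm_def
  by (induction s arbitrary: i j) (auto simp: mat_def mm_entry intro!: sum_nonneg)

lemma nnm_mpow: "nnm M \<Longrightarrow> nnm (mpow M s)"
  using mpow_nonneg_gen unfolding nnm_def by blast

lemma mpow_add: "mpow M (a + b) = mpow M a ** mpow M b"
  by (induction b) (simp_all add: matrix_mul_assoc)

lemma mv_mono: "nnm M \<Longrightarrow> (\<And>j. x $ j \<le> y $ j) \<Longrightarrow> (M *v x) $ i \<le> (M *v y) $ i"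
  unfolding mv_entry nnm_def by (intro sum_mono mult_left_mono) auto

lemma mv_one_nonneg: "nnm M \<Longrightarrow> (M *v one_vec) $ i \<ge> 0"
  unfolding mv_entry nnm_def by (auto intro!: sum_nonneg)

lemma rowbound:
  assumes M: "nnm M" and c: "\<And>i. (mpow M k *v one_vec) $ i \<le> c" "c \<ge> 0"
  shows "(mpow M (q * k) *v one_vec) $ i \<le> c ^ q"
proof (induction q arbitrary: i)
  case 0 then show ?case by simp
next
  case (Suc q)
  have "(mpow M (Suc q * k) *v one_vec) $ i = (mpow M (q * k) *v (mpow M k *v one_vec)) $ i"
  proof -
    have "Suc q * k = q * k + k" by simp
    then show ?thesis by (simp only: mpow_add matrix_vector_mul_assoc)
  qed
  also have "\<dots> \<le> (mpow M (q * k) *v (c *s one_vec)) $ i"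
    by (rule mv_mono[OF nnm_mpow[OF M]]) (simp add: c)
  also have "\<dots> = c * (mpow M (q * k) *v one_vec) $ i"
    by (simp add: mv_entry sum_distrib_left algebra_simps)
  also have "\<dots> \<le> c * c ^ q"
    by (rule mult_left_mono[OF Suc.IH c(2)])
  finally show ?case by simp
qed

lemma mpow_fix: "M *v v = v \<Longrightarrow> mpow M s *v v = v"
  by (induction s) (simp_all flip: matrix_vector_mul_assoc)

lemma inv_IminusM:
  assumes M: "nnm M" and c: "\<And>i. (mpow M k *v one_vec) $ i \<le> c" "c < 1"
  shows "(mat 1 - M) ** matrix_inv (mat 1 - M) = mat 1 \<and> matrix_inv (mat 1 - M) ** (mat 1 - M) = mat 1"
proof -
  have ker: "v = 0" if v: "(mat 1 - M) *v v = 0" for v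
  proof -
    have "M *v v = v" using v by (simp add: algebra_simps)
    then have fx: "mpow M k *v v = v" by (rule mpow_fix)
    have "Max (range (\<lambda>i. \<bar>v $ i\<bar>)) \<in> range (\<lambda>i. \<bar>v $ i\<bar>)"
      by (rule Max_in) auto
    then obtain i0 where i0e: "Max (range (\<lambda>i. \<bar>v $ i\<bar>)) = \<bar>v $ i0\<bar>" by (metis imageE)
    have i0: "\<bar>v $ i\<bar> \<le> \<bar>v $ i0\<bar>" for i
      unfolding i0e[symmetric] by (rule Max_ge) auto
    have "\<bar>v $ i0\<bar> = \<bar>\<Sum>j\<in>UNIV. mpow M k $ i0 $ j * v $ j\<bar>"
      using fx by (metis mv_entry)
    also have "\<dots> \<le> (\<Sum>j\<in>UNIV. mpow M k $ i0 $ j * \<bar>v $ i0\<bar>)"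
      using mpow_nonneg_gen[OF M] i0
      by (intro order_trans[OF sum_abs] sum_mono) (simp add: abs_mult mult_left_mono)
    also have "\<dots> = (mpow M k *v one_vec) $ i0 * \<bar>v $ i0\<bar>"
      by (simp add: mv_entry sum_distrib_right)
    also have "\<dots> \<le> c * \<bar>v $ i0\<bar>"
      by (rule mult_right_mono[OF c(1)]) simp
    finally have "\<bar>v $ i0\<bar> \<le> c * \<bar>v $ i0\<bar>" .
    with c(2) have "\<bar>v $ i0\<bar> = 0"
      by (smt (verit) mult_le_cancel_right1 abs_ge_zero)
    with i0 show "v = 0" by (metis abs_le_zero_iff vec_eq_iff zero_index)
  qed
  have "\<exists>B. B ** (mat 1 - M) = mat 1"
    using ker by (subst matrix_left_invertible_ker) blast
  then have inv: "invertible (mat 1 - M)" by (simp add: invertible_left_inverse)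
  then show ?thesis
    unfolding matrix_inv_def invertible_def by (rule someI_ex)
qed

lemma abs_le_vnorm: "\<bar>x $ j\<bar> \<le> vnorm x"
  unfolding vnorm_def by (rule Max_ge) auto

lemma vnorm_le: "(\<And>i. \<bar>x $ i\<bar> \<le> B) \<Longrightarrow> vnorm x \<le> B"
  unfolding vnorm_def by (subst Max_le_iff) auto

lemma vnorm_one: "vnorm (one_vec :: real^'m::finite) = 1"
  unfolding vnorm_def by (simp add: image_constant_conv)

lemma vnorm_le_mnorm:
  assumes "vnorm x = 1"
  shows "vnorm (A *v x) \<le> mnorm A"
  unfolding mnorm_def
proof (rule cSup_upper)
  show "vnorm (A *v x) \<in> (\<lambda>x. vnorm (A *v x)) ` {x. vnorm x = 1}" using assms by auto
  show "bdd_above ((\<lambda>x. vnorm (A *v x)) ` {x. vnorm x = 1})"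
  proof (rule bdd_aboveI2)
    fix y :: "real^'a" assume y: "y \<in> {x. vnorm x = 1}"
    show "vnorm (A *v y) \<le> (\<Sum>i\<in>UNIV. \<Sum>j\<in>UNIV. \<bar>A $ i $ j\<bar>)"
    proof (rule vnorm_le)
      fix i
      have "\<bar>(A *v y) $ i\<bar> \<le> (\<Sum>j\<in>UNIV. \<bar>A $ i $ j\<bar> * \<bar>y $ j\<bar>)"
        unfolding mv_entry by (rule order_trans[OF sum_abs]) (simp add: abs_mult)
      also have "\<dots> \<le> (\<Sum>j\<in>UNIV. \<bar>A $ i $ j\<bar>)"
        using abs_le_vnorm[of y] y by (intro sum_mono) (simp add: mult_left_le)
      also have "\<dots> \<le> (\<Sum>i\<in>UNIV. \<Sum>j\<in>UNIV. \<bar>A $ i $ j\<bar>)"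
        by (rule member_le_sum[of i UNIV "\<lambda>i. \<Sum>j\<in>UNIV. \<bar>A $ i $ j\<bar>"]) (auto intro: sum_nonneg)
      finally show "\<bar>(A *v y) $ i\<bar> \<le> (\<Sum>i\<in>UNIV. \<Sum>j\<in>UNIV. \<bar>A $ i $ j\<bar>)" .
    qed
  qed
qed


lemma IminusM_mult: "((mat 1 - M) ** (X::real^'m::finite^'m)) $ i $ j = X $ i $ j - (M ** X) $ i $ j"
proof -
  have "((mat 1 - M) ** X) $ i $ j = (\<Sum>l\<in>UNIV. (if i = l then 1 else 0) * X $ l $ j) - (M ** X) $ i $ j"
  proof -
    have "((mat 1 - M) ** X) $ i $ j = (\<Sum>l\<in>UNIV. (if i = l then 1 else 0) * X $ l $ j - M $ i $ l * X $ l $ j)"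
      unfolding mm_entry by (intro sum.cong) (auto simp: mat_def algebra_simps)
    also have "\<dots> = (\<Sum>l\<in>UNIV. (if i = l then 1 else 0) * X $ l $ j) - (\<Sum>l\<in>UNIV. M $ i $ l * X $ l $ j)"
      by (rule sum_subtractf)
    finally show ?thesis by (simp add: mm_entry)
  qed
  moreover have "(\<Sum>l\<in>UNIV. (if i = l then 1 else 0) * X $ l $ j) = X $ i $ j"
  proof -
    have "(\<Sum>l\<in>UNIV. (if i = l then 1 else 0) * X $ l $ j) = (\<Sum>l\<in>UNIV. if i = l then X $ l $ j else 0)"
      by (rule sum.cong) auto
    then show ?thesis by simp
  qed
  ultimately show ?thesis by simp
qed

lemma ellip_level:
  fixes Rn Pn Qn :: "real^'m::finite^'m"
  assumes nnR: "nnm Rn" and nnP: "nnm Pn" and nnQ: "nnm Qn"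
    and rs: "(Pn + Qn + Rn) *v one_vec = one_vec"
    and eps: "\<epsilon> > 0"
    and rk: "\<And>i. (mpow Rn k0 *v one_vec) $ i \<le> 1 - \<epsilon>"
    and eP: "\<And>i j. (matrix_inv (mat 1 - Rn) ** Pn) $ i $ j \<ge> \<epsilon>"
    and eQ: "\<And>i j. (matrix_inv (mat 1 - Rn) ** Qn) $ i $ j \<ge> \<epsilon>"
    and q: "(1 - \<epsilon>) ^ q < \<epsilon> / 2"
  shows "\<exists>s < q * k0. (mpow Rn s ** Pn) $ i $ j \<ge> \<epsilon> / (2 * real (q * k0))"
proof -
  define Ai where "Ai = matrix_inv (mat 1 - Rn)"
  define X where "X = Ai ** Pn"
  define Y where "Y = Ai ** Qn"
  have c0: "0 \<le> 1 - \<epsilon>" using rk[of i] mv_one_nonneg[OF nnm_mpow[OF nnR], of k0 i] by linarith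
  have inv: "(mat 1 - Rn) ** Ai = mat 1" "Ai ** (mat 1 - Rn) = mat 1"
    using inv_IminusM[OF nnR rk] eps unfolding Ai_def by auto
  have "(Pn + Qn) *v one_vec = (mat 1 - Rn) *v one_vec"
    using rs by (simp add: algebra_simps)
  then have e1: "Ai *v ((Pn + Qn) *v one_vec) = one_vec"
    by (simp add: matrix_vector_mul_assoc inv)
  have "(X + Y) *v one_vec = one_vec"
    unfolding X_def Y_def matrix_add_ldistrib[symmetric] matrix_vector_mul_assoc[symmetric] by (rule e1)
  then have "((X + Y) *v one_vec) $ i' = 1" for i' by simp
  then have rowXY: "(\<Sum>l\<in>UNIV. X $ i' $ l) + (\<Sum>l\<in>UNIV. Y $ i' $ l) = 1" for i'
    by (simp add: mv_entry sum.distrib)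
  have X1: "X $ i' $ j' \<le> 1" for i' j'
  proof -
    have "X $ i' $ j' \<le> (\<Sum>l\<in>UNIV. X $ i' $ l)"
      using eP eps unfolding X_def Ai_def
      by (intro member_le_sum[of j' UNIV "\<lambda>l. X $ i' $ l", unfolded X_def Ai_def]) (auto intro: order_trans[OF less_imp_le])
    moreover have "(\<Sum>l\<in>UNIV. Y $ i' $ l) \<ge> 0"
      using eQ eps unfolding Y_def Ai_def by (intro sum_nonneg) (auto intro: order_trans[OF less_imp_le])
    ultimately show ?thesis using rowXY[of i'] by linarith
  qed
  have Xeq: "X = Pn + Rn ** X"
  proof -
    have "(mat 1 - Rn) ** X = Pn" unfolding X_def by (simp add: matrix_mul_assoc inv)
    then have "X $ i' $ j' = Pn $ i' $ j' + (Rn ** X) $ i' $ j'" for i' j'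
      using IminusM_mult[of Rn X i' j'] by simp
    then show ?thesis by (simp add: vec_eq_iff)
  qed
  have exp: "X $ i $ j = (\<Sum>s<S. (mpow Rn s ** Pn) $ i $ j) + (mpow Rn S ** X) $ i $ j" for S
  proof (induction S)
    case 0 then show ?case by simp
  next
    case (Suc S)
    have "mpow Rn S ** X = mpow Rn S ** Pn + mpow Rn (Suc S) ** X"
      by (subst Xeq) (simp add: matrix_add_ldistrib matrix_mul_assoc)
    with Suc show ?case by simp
  qed
  let ?S = "q * k0"
  have "(mpow Rn ?S ** X) $ i $ j \<le> (mpow Rn ?S *v one_vec) $ i"
    unfolding mm_entry mv_entry using X1 mpow_nonneg_gen[OF nnR]
    by (intro sum_mono) (simp add: mult_left_le)
  also have "\<dots> \<le> (1 - \<epsilon>) ^ q" by (rule rowbound[OF nnR rk c0])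
  finally have tail: "(mpow Rn ?S ** X) $ i $ j < \<epsilon> / 2" using q by linarith
  have big: "(\<Sum>s<?S. (mpow Rn s ** Pn) $ i $ j) > \<epsilon> / 2"
    using exp[of ?S] tail eP[of i j] unfolding X_def Ai_def by linarith
  show ?thesis
  proof (rule ccontr)
    assume "\<not> ?thesis"
    then have lt: "\<And>s. s < ?S \<Longrightarrow> (mpow Rn s ** Pn) $ i $ j < \<epsilon> / (2 * real ?S)" by force
    have "?S \<noteq> 0"
    proof
      assume "?S = 0"
      then have "(\<Sum>s<?S. (mpow Rn s ** Pn) $ i $ j) = 0" by (simp only: lessThan_0 sum.empty)
      with big eps show False by linarith
    qed
    then have "?S > 0" by simp
    then have "(\<Sum>s<?S. (mpow Rn s ** Pn) $ i $ j) < (\<Sum>s<?S. \<epsilon> / (2 * real ?S))"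
    proof (intro sum_strict_mono)
      show "{..<?S} \<noteq> {}" using \<open>?S > 0\<close> by (metis emptyE lessThan_iff)
      fix s assume "s \<in> {..<?S}"
      then show "(mpow Rn s ** Pn) $ i $ j < \<epsilon> / (2 * real ?S)" using lt by blast
    qed simp
    also have "\<dots> = \<epsilon> / 2" using \<open>?S > 0\<close> by simp
    finally show False using big by simp
  qed
qed


definition Top :: "'m::finite env \<Rightarrow> 'm env \<Rightarrow> 'm env \<Rightarrow> (int \<times> 'm \<Rightarrow> real) \<Rightarrow> int \<times> 'm \<Rightarrow> real" where
  "Top P Q R \<phi> z = (\<Sum>p\<in>{-1,0,1::int} \<times> (UNIV::'m set).
       trans P Q R z (fst z + fst p, snd p) * \<phi> (fst z + fst p, snd p))"

primrec Tpow :: "'m::finite env \<Rightarrow> 'm env \<Rightarrow> 'm env \<Rightarrow> nat \<Rightarrow> (int \<times> 'm \<Rightarrow> real) \<Rightarrow> int \<times> 'm \<Rightarrow> real" where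
  "Tpow P Q R 0 \<phi> = \<phi>"
| "Tpow P Q R (Suc t) \<phi> = Top P Q R (Tpow P Q R t \<phi>)"

definition Ez :: "'m::finite env \<Rightarrow> 'm env \<Rightarrow> 'm env \<Rightarrow> int \<times> 'm \<Rightarrow> nat \<Rightarrow> ((int \<times> 'm) list \<Rightarrow> real) \<Rightarrow> real" where
  "Ez P Q R z n F = (\<Sum>xs\<in>paths z n. path_prob P Q R xs * F xs)"

definition Box :: "int \<Rightarrow> nat \<Rightarrow> (int \<times> 'm::finite) set" where
  "Box c r = {c - int r .. c + int r} \<times> UNIV"

definition LB :: "'a set \<Rightarrow> nat \<Rightarrow> 'a list set" where
  "LB A n = {xs. set xs \<subseteq> A \<and> length xs = n}"

lemma sum_prod_split: "(\<Sum>p\<in>A \<times> B. g p) = (\<Sum>a\<in>A. \<Sum>b\<in>B. g (a, b))"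
  by (simp add: sum.cartesian_product)

lemma Top_expand:
  "Top P Q R \<phi> (k,i) = (\<Sum>j\<in>UNIV. P k $ i $ j * \<phi> (k+1, j)) + (\<Sum>j\<in>UNIV. R k $ i $ j * \<phi> (k, j))
     + (\<Sum>j\<in>UNIV. Q k $ i $ j * \<phi> (k - 1, j))"
  unfolding Top_def sum_prod_split
  by (simp add: trans_def algebra_simps)

lemma finite_Box[simp]: "finite (Box c r)"
  unfolding Box_def by simp

lemma pp_cons2: "path_prob P Q R (z # u # ws) = trans P Q R z u * path_prob P Q R (u # ws)"
proof -
  have "path_prob P Q R (z # u # ws) = (\<Prod>i<Suc (length ws). trans P Q R ((z # u # ws) ! i) ((z # u # ws) ! (i + 1)))"
    unfolding path_prob_def by simp
  also have "\<dots> = trans P Q R z u * (\<Prod>i<length ws. trans P Q R ((u # ws) ! i) ((u # ws) ! (i + 1)))"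
    by (subst prod.lessThan_Suc_shift) simp
  finally show ?thesis unfolding path_prob_def by simp
qed

lemma pp_single: "path_prob P Q R [z] = 1"
  unfolding path_prob_def by simp

lemma trans_nz: "trans P Q R z u \<noteq> 0 \<Longrightarrow> \<bar>fst u - fst z\<bar> \<le> 1"
  unfolding trans_def by (cases z; cases u; auto split: if_splits)

lemma pp_range: "path_prob P Q R (z # ys) \<noteq> 0 \<Longrightarrow> w \<in> set ys \<Longrightarrow> \<bar>fst w - fst z\<bar> \<le> int (length ys)"
proof (induction ys arbitrary: z)
  case Nil then show ?case by simp
next
  case (Cons u ws)
  have t: "trans P Q R z u \<noteq> 0" and p: "path_prob P Q R (u # ws) \<noteq> 0"
    using Cons.prems(1) by (auto simp: pp_cons2)
  have tz: "\<bar>fst u - fst z\<bar> \<le> 1" using trans_nz[OF t] .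
  show ?case
  proof (cases "w = u")
    case True then show ?thesis using tz by simp
  next
    case False
    then have "w \<in> set ws" using Cons.prems(2) by simp
    from Cons.IH[OF p this] tz show ?thesis by simp
  qed
qed

lemma paths_Suc: "paths z (Suc m) = Cons z ` LB (Box (fst z) (Suc m)) m"
proof (rule set_eqI)
  fix xs
  show "xs \<in> paths z (Suc m) \<longleftrightarrow> xs \<in> Cons z ` LB (Box (fst z) (Suc m)) m"
  proof
    assume "xs \<in> paths z (Suc m)"
    then obtain y ys where xs: "xs = y # ys" and "length ys = m" "y = z" 
      and s: "set xs \<subseteq> {fst z - int (Suc m) .. fst z + int (Suc m)} \<times> UNIV"
      unfolding paths_def by (cases xs) auto
    then show "xs \<in> Cons z ` LB (Box (fst z) (Suc m)) m"
      unfolding LB_def Box_def by auto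
  next
    assume "xs \<in> Cons z ` LB (Box (fst z) (Suc m)) m"
    then obtain ys where xs: "xs = z # ys" and "set ys \<subseteq> Box (fst z) (Suc m)" "length ys = m"
      unfolding LB_def by auto
    then show "xs \<in> paths z (Suc m)"
      unfolding paths_def Box_def by (cases z) auto
  qed
qed

lemma paths_0: "paths z 0 = {[]}"
  unfolding paths_def by auto

lemma finite_LB: "finite A \<Longrightarrow> finite (LB A n)"
  unfolding LB_def by (rule finite_lists_length_eq)

lemma S_box:
  assumes A: "finite A" "Box (fst z) m \<subseteq> A"
  shows "(\<Sum>ys\<in>LB A m. path_prob P Q R (z # ys) * F ys)
       = (\<Sum>ys\<in>LB (Box (fst z) m) m. path_prob P Q R (z # ys) * F ys)"
proof (rule sum.mono_neutral_right)
  show "finite (LB A m)" using A by (simp add: finite_LB)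
  show "LB (Box (fst z) m) m \<subseteq> LB A m" using A unfolding LB_def by auto
  show "\<forall>ys\<in>LB A m - LB (Box (fst z) m) m. path_prob P Q R (z # ys) * F ys = 0"
  proof
    fix ys assume ys: "ys \<in> LB A m - LB (Box (fst z) m) m"
    then obtain w where w: "w \<in> set ys" "w \<notin> Box (fst z) m" and len: "length ys = m"
      unfolding LB_def by auto
    have "path_prob P Q R (z # ys) = 0"
    proof (rule ccontr)
      assume "path_prob P Q R (z # ys) \<noteq> 0"
      from pp_range[OF this w(1)] len w(2) show False
        unfolding Box_def by (cases w) auto
    qed
    then show "path_prob P Q R (z # ys) * F ys = 0" by simp
  qed
qed

lemma Ez_Suc_box:
  assumes A: "finite A" "Box (fst z) m \<subseteq> A"
  shows "Ez P Q R z (Suc m) F = (\<Sum>ys\<in>LB A m. path_prob P Q R (z # ys) * F (z # ys))"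
proof -
  have "Ez P Q R z (Suc m) F = (\<Sum>ys\<in>LB (Box (fst z) (Suc m)) m. path_prob P Q R (z # ys) * F (z # ys))"
    unfolding Ez_def paths_Suc by (subst sum.reindex) (auto simp: inj_on_def)
  also have "\<dots> = (\<Sum>ys\<in>LB (Box (fst z) m) m. path_prob P Q R (z # ys) * F (z # ys))"
    by (rule S_box[where F="\<lambda>ys. F (z # ys)"]) (auto simp: Box_def)
  also have "\<dots> = (\<Sum>ys\<in>LB A m. path_prob P Q R (z # ys) * F (z # ys))"
    by (rule S_box[where F="\<lambda>ys. F (z # ys)", symmetric]) (use A in auto)
  finally show ?thesis .
qed

lemma Top_as_sum:
  assumes A: "finite A" "Box (fst z) 1 \<subseteq> A"
  shows "(\<Sum>u\<in>A. trans P Q R z u * \<phi> u) = Top P Q R \<phi> z"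
proof -
  let ?f = "\<lambda>p::int \<times> 'a. (fst z + fst p, snd p)"
  let ?N = "?f ` ({-1,0,1::int} \<times> (UNIV::'a set))"
  have NA: "?N \<subseteq> A" using A(2) unfolding Box_def by auto
  have "(\<Sum>u\<in>A. trans P Q R z u * \<phi> u) = (\<Sum>u\<in>?N. trans P Q R z u * \<phi> u)"
  proof (rule sum.mono_neutral_right[OF A(1) NA], rule)
    fix u assume u: "u \<in> A - ?N"
    have "trans P Q R z u = 0"
    proof (rule ccontr)
      assume "trans P Q R z u \<noteq> 0"
      from trans_nz[OF this] have "fst u - fst z \<in> {-1,0,1}" by auto
      then have "u \<in> ?N" by (intro image_eqI[where x="(fst u - fst z, snd u)"]) auto
      with u show False by simp
    qed
    then show "trans P Q R z u * \<phi> u = 0" by simp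
  qed
  also have "\<dots> = Top P Q R \<phi> z"
    unfolding Top_def by (subst sum.reindex) (auto simp: inj_on_def)
  finally show ?thesis .
qed

locale strip =
  fixes P Q R :: "'m::finite env"
  assumes nonneg: "\<And>n i j. P n $ i $ j \<ge> 0 \<and> Q n $ i $ j \<ge> 0 \<and> R n $ i $ j \<ge> 0"
    and rowsum: "\<And>n. (P n + Q n + R n) *v one_vec = one_vec"
begin

lemma trans_nonneg: "trans P Q R s t \<ge> 0"
  unfolding trans_def using nonneg by (cases s; cases t) auto

lemma row1: "(\<Sum>j\<in>UNIV. P k $ i $ j) + (\<Sum>j\<in>UNIV. R k $ i $ j) + (\<Sum>j\<in>UNIV. Q k $ i $ j) = 1"
proof -
  have "((P k + Q k + R k) *v one_vec) $ i = 1" using rowsum[of k] by (simp add: one_vec_def)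
  then show ?thesis by (simp add: matrix_vector_mult_def one_vec_def sum.distrib)
qed

lemma entry_le1: "P k $ i $ j \<le> 1 \<and> Q k $ i $ j \<le> 1 \<and> R k $ i $ j \<le> 1"
proof -
  have a: "M k $ i $ j \<le> (\<Sum>j\<in>UNIV. M k $ i $ j)" if "\<forall>j. M k $ i $ j \<ge> 0" for M :: "'m env"
    using member_le_sum[of j UNIV "\<lambda>j. M k $ i $ j"] that by auto
  have "P k $ i $ j \<le> (\<Sum>j\<in>UNIV. P k $ i $ j)" "Q k $ i $ j \<le> (\<Sum>j\<in>UNIV. Q k $ i $ j)"
     "R k $ i $ j \<le> (\<Sum>j\<in>UNIV. R k $ i $ j)" using nonneg by (auto intro!: a)
  moreover have "(\<Sum>j\<in>UNIV. P k $ i $ j) \<ge> 0" "(\<Sum>j\<in>UNIV. Q k $ i $ j) \<ge> 0" "(\<Sum>j\<in>UNIV. R k $ i $ j) \<ge> 0"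
    using nonneg by (auto intro: sum_nonneg)
  ultimately show ?thesis using row1[of k i] by linarith
qed

lemma Top_const[simp]: "Top P Q R (\<lambda>w. c) z = c"
proof (cases z)
  case (Pair k i)
  have "Top P Q R (\<lambda>w. c) (k,i) = c * ((\<Sum>j\<in>UNIV. P k $ i $ j) + (\<Sum>j\<in>UNIV. R k $ i $ j) + (\<Sum>j\<in>UNIV. Q k $ i $ j))"
    unfolding Top_expand by (simp add: sum_distrib_left sum_distrib_right algebra_simps)
  then show ?thesis using row1 Pair by simp
qed

lemma Top_add: "Top P Q R (\<lambda>w. \<phi> w + \<psi> w) z = Top P Q R \<phi> z + Top P Q R \<psi> z"
  unfolding Top_def by (simp add: sum.distrib algebra_simps)

lemma Top_scale: "Top P Q R (\<lambda>w. c * \<phi> w) z = c * Top P Q R \<phi> z"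
  unfolding Top_def by (simp add: sum_distrib_left algebra_simps)

lemma Top_diff: "Top P Q R (\<lambda>w. \<phi> w - \<psi> w) z = Top P Q R \<phi> z - Top P Q R \<psi> z"
  unfolding Top_def by (simp add: sum_subtractf algebra_simps)

lemma Top_mono: "(\<And>w. \<phi> w \<le> \<psi> w) \<Longrightarrow> Top P Q R \<phi> z \<le> Top P Q R \<psi> z"
  unfolding Top_def by (intro sum_mono mult_left_mono) (auto simp: trans_nonneg)

lemma Top_sum: "finite S \<Longrightarrow> Top P Q R (\<lambda>w. \<Sum>s\<in>S. f s w) z = (\<Sum>s\<in>S. Top P Q R (f s) z)"
  by (induction S rule: finite_induct) (simp_all add: Top_add)

lemma Tpow_add: "Tpow P Q R (a + b) \<phi> = Tpow P Q R a (Tpow P Q R b \<phi>)"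
  by (induction a) auto

lemma Tpow_Suc': "Tpow P Q R (Suc t) \<phi> = Tpow P Q R t (Top P Q R \<phi>)"
  using Tpow_add[of t 1 \<phi>] by (simp add: fun_eq_iff)

lemma Tpow_Suc_pt: "Tpow P Q R (Suc t) \<phi> z = Tpow P Q R t (Top P Q R \<phi>) z"
  by (simp only: Tpow_Suc')

lemma Tpow_const[simp]: "Tpow P Q R t (\<lambda>w. c) = (\<lambda>w. c)"
  by (induction t) simp_all

lemma Tpow_add_fun: "Tpow P Q R t (\<lambda>w. \<phi> w + \<psi> w) = (\<lambda>z. Tpow P Q R t \<phi> z + Tpow P Q R t \<psi> z)"
  by (induction t) (simp_all add: Top_add)

lemma Tpow_scale: "Tpow P Q R t (\<lambda>w. c * \<phi> w) = (\<lambda>z. c * Tpow P Q R t \<phi> z)"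
  by (induction t) (simp_all add: Top_scale)

lemma Tpow_diff: "Tpow P Q R t (\<lambda>w. \<phi> w - \<psi> w) = (\<lambda>z. Tpow P Q R t \<phi> z - Tpow P Q R t \<psi> z)"
  by (induction t) (simp_all add: Top_diff)

lemma Tpow_mono: "(\<And>w. \<phi> w \<le> \<psi> w) \<Longrightarrow> Tpow P Q R t \<phi> z \<le> Tpow P Q R t \<psi> z"
  by (induction t arbitrary: z) (auto intro: Top_mono)

lemma Ez_rec: "Ez P Q R z (Suc n) F = Top P Q R (\<lambda>u. Ez P Q R u n (\<lambda>ys. F (z # ys))) z"
proof (cases n)
  case 0
  have "Ez P Q R z (Suc 0) F = F [z]"
  proof -
    have e: "LB (Box (fst z) (Suc 0)) 0 = {[]}" unfolding LB_def by auto
    show ?thesis unfolding Ez_def paths_Suc e by (simp add: pp_single)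
  qed
  moreover have "Ez P Q R u 0 G = G []" for u G unfolding Ez_def paths_0 by (simp add: path_prob_def)
  ultimately show ?thesis using 0 by simp
next
  case (Suc m)
  let ?A = "Box (fst z) (Suc m) :: (int \<times> 'm) set"
  have "Ez P Q R z (Suc (Suc m)) F = (\<Sum>ys\<in>LB ?A (Suc m). path_prob P Q R (z # ys) * F (z # ys))"
    by (rule Ez_Suc_box) (auto simp: Box_def)
  also have "\<dots> = (\<Sum>p\<in>LB ?A m \<times> ?A. path_prob P Q R (z # snd p # fst p) * F (z # snd p # fst p))"
    unfolding LB_def lists_length_Suc_eq
    by (subst sum.reindex) (auto simp: inj_on_def case_prod_beta)
  also have "\<dots> = (\<Sum>u\<in>?A. \<Sum>ws\<in>LB ?A m. trans P Q R z u * (path_prob P Q R (u # ws) * F (z # u # ws)))"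
    unfolding sum_prod_split by (subst sum.swap) (simp add: pp_cons2 mult.assoc)
  also have "\<dots> = (\<Sum>u\<in>?A. trans P Q R z u * Ez P Q R u (Suc m) (\<lambda>ys. F (z # ys)))"
  proof (rule sum.cong[OF refl])
    fix u assume u: "u \<in> ?A"
    show "(\<Sum>ws\<in>LB ?A m. trans P Q R z u * (path_prob P Q R (u # ws) * F (z # u # ws)))
        = trans P Q R z u * Ez P Q R u (Suc m) (\<lambda>ys. F (z # ys))"
    proof (cases "trans P Q R z u = 0")
      case True then show ?thesis by simp
    next
      case False
      from trans_nz[OF this] have "Box (fst u) m \<subseteq> ?A" unfolding Box_def by auto
      from Ez_Suc_box[OF _ this, of P Q R "\<lambda>ys. F (z # ys)"]
      show ?thesis by (simp add: sum_distrib_left)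
    qed
  qed
  also have "\<dots> = Top P Q R (\<lambda>u. Ez P Q R u (Suc m) (\<lambda>ys. F (z # ys))) z"
    by (rule Top_as_sum) (auto simp: Box_def)
  finally show ?thesis using Suc by simp
qed

lemma pp_nonneg: "path_prob P Q R xs \<ge> 0"
  unfolding path_prob_def by (intro prod_nonneg) (auto simp: trans_nonneg)

lemma Ez_add: "Ez P Q R z n (\<lambda>xs. F xs + G xs) = Ez P Q R z n F + Ez P Q R z n G"
  unfolding Ez_def by (simp add: sum.distrib algebra_simps)

lemma Ez_scale: "Ez P Q R z n (\<lambda>xs. c * F xs) = c * Ez P Q R z n F"
  unfolding Ez_def by (simp add: sum_distrib_left algebra_simps)

lemma Ez_mono: "(\<And>xs. F xs \<le> G xs) \<Longrightarrow> Ez P Q R z n F \<le> Ez P Q R z n G"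
  unfolding Ez_def by (intro sum_mono mult_left_mono) (auto simp: pp_nonneg)

lemma Ez_one: "Ez P Q R z n (\<lambda>xs. 1) = 1"
proof (induction n arbitrary: z)
  case 0 then show ?case unfolding Ez_def paths_0 by (simp add: path_prob_def)
next
  case (Suc n) then show ?case by (simp add: Ez_rec)
qed

definition ind :: "int \<times> 'm \<Rightarrow> int \<times> 'm \<Rightarrow> real" where
  "ind w = (\<lambda>u. if u = w then 1 else 0)"

lemma mpow_nonneg: "mpow (R k) s $ i $ j \<ge> 0"
proof (induction s arbitrary: i j)
  case 0 then show ?case by (simp add: mat_def)
next
  case (Suc s) then show ?case
    using nonneg by (simp add: matrix_matrix_mult_def sum_nonneg)
qed

lemma Top_ge_R: "(\<And>w. \<psi> w \<ge> 0) \<Longrightarrow> Top P Q R \<psi> (k,l) \<ge> (\<Sum>l'\<in>UNIV. R k $ l $ l' * \<psi> (k,l'))"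
  unfolding Top_expand using nonneg
  by (smt (verit, best) mult_nonneg_nonneg sum_nonneg)

lemma Top_nonneg: "(\<And>w. \<psi> w \<ge> 0) \<Longrightarrow> Top P Q R \<psi> z \<ge> 0"
  using Top_mono[of "\<lambda>w. 0" \<psi> z] by simp

lemma Tpow_nonneg: "(\<And>w. \<psi> w \<ge> 0) \<Longrightarrow> Tpow P Q R t \<psi> z \<ge> 0"
  using Tpow_mono[of "\<lambda>w. 0" \<psi> t z] by simp

lemma Tpow_R_lower0:
  "Tpow P Q R 0 \<psi> (k,i) \<ge> (\<Sum>l\<in>UNIV. mpow (R k) 0 $ i $ l * \<psi> (k,l))"
proof -
  have "(\<Sum>l\<in>UNIV. mpow (R k) 0 $ i $ l * \<psi> (k,l)) = (\<Sum>l\<in>UNIV. if i = l then \<psi> (k,l) else 0)"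
    by (rule sum.cong) (auto simp: mat_def)
  also have "\<dots> = \<psi> (k,i)" by simp
  finally show ?thesis by simp
qed

lemma Tpow_R_lower:
  "(\<And>w. \<psi> w \<ge> 0) \<Longrightarrow> Tpow P Q R s \<psi> (k,i) \<ge> (\<Sum>l\<in>UNIV. mpow (R k) s $ i $ l * \<psi> (k,l))"
proof (induction s arbitrary: \<psi>)
  case 0 show ?case by (rule Tpow_R_lower0)
next
  case (Suc s)
  have tn: "\<And>w. Top P Q R \<psi> w \<ge> 0" using Top_nonneg Suc.prems by blast
  have "(\<Sum>l'\<in>UNIV. mpow (R k) (Suc s) $ i $ l' * \<psi> (k,l'))
      = (\<Sum>l\<in>UNIV. mpow (R k) s $ i $ l * (\<Sum>l'\<in>UNIV. R k $ l $ l' * \<psi> (k,l')))"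
    unfolding matrix_matrix_mult_def mpow.simps
    by (simp add: sum_distrib_left sum_distrib_right mult.assoc, subst sum.swap, simp)
  also have "\<dots> \<le> (\<Sum>l\<in>UNIV. mpow (R k) s $ i $ l * Top P Q R \<psi> (k,l))"
    by (intro sum_mono mult_left_mono Top_ge_R Suc.prems mpow_nonneg)
  also have "\<dots> \<le> Tpow P Q R s (Top P Q R \<psi>) (k,i)"
    using Suc.IH tn by blast
  also have "\<dots> = Tpow P Q R (Suc s) \<psi> (k,i)" by (rule Tpow_Suc_pt[symmetric])
  finally show ?case .
qed

lemma Top_ind_up: "Top P Q R (ind (k+1, j)) (k,l) = P k $ l $ j"
  unfolding Top_expand ind_def by (simp add: if_distrib cong: if_cong)

lemma Top_ind_down: "Top P Q R (ind (k-1, j)) (k,l) = Q k $ l $ j"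
  unfolding Top_expand ind_def by (simp add: if_distrib cong: if_cong)

lemma ind_nonneg: "ind w u \<ge> 0" unfolding ind_def by simp

lemma reach_up: "Tpow P Q R (Suc s) (ind (k+1, j)) (k,i) \<ge> (mpow (R k) s ** P k) $ i $ j"
proof -
  have "(mpow (R k) s ** P k) $ i $ j = (\<Sum>l\<in>UNIV. mpow (R k) s $ i $ l * Top P Q R (ind (k+1, j)) (k,l))"
    unfolding Top_ind_up matrix_matrix_mult_def by simp
  also have "\<dots> \<le> Tpow P Q R s (Top P Q R (ind (k+1, j))) (k,i)"
    by (rule Tpow_R_lower) (intro Top_nonneg ind_nonneg)
  also have "\<dots> = Tpow P Q R (Suc s) (ind (k+1, j)) (k,i)"
    by (rule Tpow_Suc_pt[symmetric])
  finally show ?thesis .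
qed

lemma reach_down: "Tpow P Q R (Suc s) (ind (k-1, j)) (k,i) \<ge> (mpow (R k) s ** Q k) $ i $ j"
proof -
  have "(mpow (R k) s ** Q k) $ i $ j = (\<Sum>l\<in>UNIV. mpow (R k) s $ i $ l * Top P Q R (ind (k-1, j)) (k,l))"
    unfolding Top_ind_down matrix_matrix_mult_def by simp
  also have "\<dots> \<le> Tpow P Q R s (Top P Q R (ind (k-1, j))) (k,i)"
    by (rule Tpow_R_lower) (intro Top_nonneg ind_nonneg)
  also have "\<dots> = Tpow P Q R (Suc s) (ind (k-1, j)) (k,i)"
    by (rule Tpow_Suc_pt[symmetric])
  finally show ?thesis .
qed

end


definition mmv :: "(int \<Rightarrow> real^'m::finite) \<Rightarrow> int \<times> 'm \<Rightarrow> real" where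
  "mmv mm w = mm (fst w) $ snd w"

lemma abs_le_quad:
  fixes x l :: real
  assumes "l > 0"
  shows "\<bar>x\<bar> \<le> (1 / (2 * l)) * x^2 + l / 2"
proof -
  have "0 \<le> (\<bar>x\<bar> - l)^2" by simp
  then have "2 * l * \<bar>x\<bar> \<le> x^2 + l^2"
    by (simp add: power2_eq_square algebra_simps abs_mult_self_eq)
  then have "\<bar>x\<bar> \<le> (x^2 + l^2) / (2 * l)" using assms by (simp add: pos_le_divide_eq mult.commute)
  also have "\<dots> = (1 / (2 * l)) * x^2 + l / 2" using assms by (simp add: field_simps power2_eq_square)
  finally show ?thesis .
qed
lemma sq_l: "real t * K^2 = (K * sqrt (real t))^2"
  by (simp add: power_mult_distrib)
lemma half_l: "(l::real) > 0 \<Longrightarrow> (1 / (2 * l)) * l^2 + l / 2 = l"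
  by (simp add: power2_eq_square)

context strip
begin

lemma Top_harm:
  assumes mm_eq: "\<And>n. mm n = P n *v mm (n + 1) + R n *v mm n + Q n *v mm (n - 1)"
  shows "Top P Q R (mmv mm) z = mmv mm z"
proof (cases z)
  case (Pair k i)
  have "mm k $ i = (P k *v mm (k + 1)) $ i + (R k *v mm k) $ i + (Q k *v mm (k - 1)) $ i"
    using mm_eq[of k] by (metis vector_add_component)
  then show ?thesis unfolding Pair Top_expand mmv_def by (simp add: mv_entry)
qed

lemma Top_abs_le: "\<bar>Top P Q R \<phi> z\<bar> \<le> Top P Q R (\<lambda>w. \<bar>\<phi> w\<bar>) z"
  unfolding Top_def
  by (rule order_trans[OF sum_abs]) (simp add: abs_mult trans_nonneg)

lemma Top_sub:
  assumes mm_eq: "\<And>n. mm n = P n *v mm (n + 1) + R n *v mm n + Q n *v mm (n - 1)"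
  shows "Top P Q R (\<lambda>w. \<bar>mmv mm w - c\<bar>) z \<ge> \<bar>mmv mm z - c\<bar>"
proof -
  have "Top P Q R (\<lambda>w. mmv mm w - c) z = mmv mm z - c"
    by (simp add: Top_diff Top_harm[OF mm_eq])
  then show ?thesis using Top_abs_le[of "\<lambda>w. mmv mm w - c" z] by simp
qed

lemma Top_mono_nb:
  "(\<And>w. \<bar>fst w - fst z\<bar> \<le> 1 \<Longrightarrow> \<phi> w \<le> \<psi> w) \<Longrightarrow> Top P Q R \<phi> z \<le> Top P Q R \<psi> z"
  unfolding Top_def by (intro sum_mono mult_left_mono) (auto simp: trans_nonneg)

lemma Top_sq:
  assumes mm_eq: "\<And>n. mm n = P n *v mm (n + 1) + R n *v mm n + Q n *v mm (n - 1)"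
    and lip: "\<And>n' n'' i' i''. \<bar>n' - n''\<bar> \<le> 1 \<Longrightarrow> \<bar>mm n' $ i' - mm n'' $ i''\<bar> \<le> K"
  shows "Top P Q R (\<lambda>w. (mmv mm w - b)^2) z \<le> (mmv mm z - b)^2 + K^2"
proof -
  let ?m = "mmv mm"
  have eq: "(\<lambda>w. (?m w - b)^2) = (\<lambda>w. (?m w - ?m z)^2 + (2 * (?m z - b) * (?m w - ?m z) + (?m z - b)^2))"
    by (rule ext) (simp add: power2_eq_square algebra_simps)
  have t1: "Top P Q R (\<lambda>w. (?m w - ?m z)^2) z \<le> K^2"
  proof -
    have "Top P Q R (\<lambda>w. (?m w - ?m z)^2) z \<le> Top P Q R (\<lambda>w. K^2) z"
    proof (rule Top_mono_nb)
      fix w :: "int \<times> 'm" assume "\<bar>fst w - fst z\<bar> \<le> 1"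
      then have "\<bar>?m w - ?m z\<bar> \<le> K" unfolding mmv_def by (rule lip)
      then have "\<bar>?m w - ?m z\<bar>^2 \<le> K^2" by (intro power_mono) simp_all
      then show "(?m w - ?m z)^2 \<le> K^2" by simp
    qed
    then show ?thesis by simp
  qed
  have t2: "Top P Q R (\<lambda>w. 2 * (?m z - b) * (?m w - ?m z)) z = 0"
    by (simp add: Top_scale Top_diff Top_harm[OF mm_eq])
  show ?thesis
    unfolding eq Top_add t2 using t1 by simp
qed

lemma Tpow_sq:
  assumes mm_eq: "\<And>n. mm n = P n *v mm (n + 1) + R n *v mm n + Q n *v mm (n - 1)"
    and lip: "\<And>n' n'' i' i''. \<bar>n' - n''\<bar> \<le> 1 \<Longrightarrow> \<bar>mm n' $ i' - mm n'' $ i''\<bar> \<le> K"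
  shows "Tpow P Q R t (\<lambda>w. (mmv mm w - b)^2) z \<le> (mmv mm z - b)^2 + real t * K^2"
proof (induction t arbitrary: z)
  case 0 then show ?case by simp
next
  case (Suc t)
  have "Tpow P Q R (Suc t) (\<lambda>w. (mmv mm w - b)^2) z = Tpow P Q R t (Top P Q R (\<lambda>w. (mmv mm w - b)^2)) z"
    by (rule Tpow_Suc_pt)
  also have "\<dots> \<le> Tpow P Q R t (\<lambda>w. (mmv mm w - b)^2 + K^2) z"
    by (rule Tpow_mono) (rule Top_sq[OF mm_eq lip])
  also have "\<dots> = Tpow P Q R t (\<lambda>w. (mmv mm w - b)^2) z + K^2"
    by (simp add: Tpow_add_fun)
  also have "\<dots> \<le> (mmv mm z - b)^2 + real (Suc t) * K^2"
    using Suc.IH[of z] by (simp add: algebra_simps)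
  finally show ?case .
qed

lemma Tpow_absdev:
  assumes mm_eq: "\<And>n. mm n = P n *v mm (n + 1) + R n *v mm n + Q n *v mm (n - 1)"
    and lip: "\<And>n' n'' i' i''. \<bar>n' - n''\<bar> \<le> 1 \<Longrightarrow> \<bar>mm n' $ i' - mm n'' $ i''\<bar> \<le> K"
    and Kpos: "K > 0"
  shows "Tpow P Q R t (\<lambda>w. \<bar>mmv mm w - mmv mm z\<bar>) z \<le> K * sqrt (real t)"
proof (cases "t = 0")
  case True then show ?thesis by simp
next
  case False
  define l where "l = K * sqrt (real t)"
  have lpos: "l > 0" using False Kpos unfolding l_def by simp
  have "Tpow P Q R t (\<lambda>w. \<bar>mmv mm w - mmv mm z\<bar>) z
      \<le> Tpow P Q R t (\<lambda>w. (1 / (2 * l)) * (mmv mm w - mmv mm z)^2 + l / 2) z"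
    by (rule Tpow_mono) (rule abs_le_quad[OF lpos])
  also have "\<dots> = (1 / (2 * l)) * Tpow P Q R t (\<lambda>w. (mmv mm w - mmv mm z)^2) z + l / 2"
    by (simp only: Tpow_add_fun Tpow_scale Tpow_const)
  also have "\<dots> \<le> (1 / (2 * l)) * (real t * K^2) + l / 2"
    using Tpow_sq[OF mm_eq lip, of t "mmv mm z" z] lpos by (simp add: divide_right_mono)
  also have "\<dots> = l"
    unfolding sq_l l_def[symmetric] by (rule half_l[OF lpos])
  finally show ?thesis unfolding l_def .
qed

lemma Tpow_time_mono:
  assumes mm_eq: "\<And>n. mm n = P n *v mm (n + 1) + R n *v mm n + Q n *v mm (n - 1)"
  shows "Tpow P Q R t (\<lambda>w. \<bar>mmv mm w - c\<bar>) z \<le> Tpow P Q R (t + d) (\<lambda>w. \<bar>mmv mm w - c\<bar>) z"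
proof (induction d arbitrary: z)
  case 0 then show ?case by simp
next
  case (Suc d)
  have "Tpow P Q R (t + d) (\<lambda>w. \<bar>mmv mm w - c\<bar>) z \<le> Tpow P Q R (t + d) (Top P Q R (\<lambda>w. \<bar>mmv mm w - c\<bar>)) z"
    by (rule Tpow_mono) (rule Top_sub[OF mm_eq])
  also have "\<dots> = Tpow P Q R (t + Suc d) (\<lambda>w. \<bar>mmv mm w - c\<bar>) z"
    by (simp only: add_Suc_right Tpow_Suc_pt)
  finally show ?case using Suc.IH[of z] by linarith
qed


lemma Ez_0: "Ez P Q R z 0 F = F []"
  unfolding Ez_def paths_0 by (simp add: path_prob_def)

lemma Ez_const: "Ez P Q R z n (\<lambda>xs. c) = c"
  using Ez_scale[of z n c "\<lambda>xs. 1"] Ez_one[of z n] by simp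

lemma visits_Cons: "real (visits x (z # ys)) = ind x z + real (visits x ys)"
  unfolding visits_def ind_def by simp

lemma e_rec: "Ez P Q R z (Suc n) (\<lambda>xs. real (visits x xs))
   = ind x z + Top P Q R (\<lambda>u. Ez P Q R u n (\<lambda>xs. real (visits x xs))) z"
proof -
  have "Ez P Q R u n (\<lambda>ys. real (visits x (z # ys))) = ind x z + Ez P Q R u n (\<lambda>xs. real (visits x xs))" for u
    unfolding visits_Cons by (simp add: Ez_add Ez_const)
  then show ?thesis unfolding Ez_rec by (simp add: Top_add)
qed

lemma e_nonneg: "Ez P Q R z n (\<lambda>xs. real (visits x xs)) \<ge> 0"
  using Ez_mono[of "\<lambda>xs. 0" "\<lambda>xs. real (visits x xs)" z n] by (simp add: Ez_const)

lemma ind_sq: "ind x z * ind x z = ind x z"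
  unfolding ind_def by simp

lemma h_rec: "Ez P Q R z (Suc n) (\<lambda>xs. real (visits x xs)^2)
   = ind x z + 2 * ind x z * Top P Q R (\<lambda>u. Ez P Q R u n (\<lambda>xs. real (visits x xs))) z
     + Top P Q R (\<lambda>u. Ez P Q R u n (\<lambda>xs. real (visits x xs)^2)) z"
proof -
  let ?a = "ind x z"
  have "Ez P Q R u n (\<lambda>ys. real (visits x (z # ys))^2)
     = ?a + (2 * ?a * Ez P Q R u n (\<lambda>xs. real (visits x xs)) + Ez P Q R u n (\<lambda>xs. real (visits x xs)^2))" for u
  proof -
    have "(\<lambda>ys. real (visits x (z # ys))^2) = (\<lambda>ys. ?a + ((2 * ?a) * real (visits x ys) + real (visits x ys)^2))"
      unfolding visits_Cons by (rule ext) (simp add: power2_eq_square algebra_simps ind_sq)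
    then show ?thesis by (simp add: Ez_add Ez_const Ez_scale)
  qed
  then show ?thesis unfolding Ez_rec by (simp add: Top_add Top_scale)
qed

lemma h_bound:
  assumes G: "\<And>m u. m \<le> N \<Longrightarrow> Ez P Q R u m (\<lambda>xs. real (visits x xs)) \<le> G"
  shows "n \<le> N \<Longrightarrow> Ez P Q R z n (\<lambda>xs. real (visits x xs)^2) \<le> (1 + 2 * G) * Ez P Q R z n (\<lambda>xs. real (visits x xs))"
proof (induction n arbitrary: z)
  case 0 then show ?case by (simp add: Ez_0 visits_def)
next
  case (Suc n)
  let ?e = "\<lambda>u. Ez P Q R u n (\<lambda>xs. real (visits x xs))"
  let ?h = "\<lambda>u. Ez P Q R u n (\<lambda>xs. real (visits x xs)^2)"
  let ?a = "ind x z"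
  have a0: "?a \<ge> 0" by (rule ind_nonneg)
  have "?a + Top P Q R ?e z \<le> G" using G[OF Suc.prems, of z] unfolding e_rec .
  then have te: "Top P Q R ?e z \<le> G" using a0 by linarith
  have th: "Top P Q R ?h z \<le> Top P Q R (\<lambda>u. (1 + 2 * G) * ?e u) z"
    by (rule Top_mono) (use Suc in auto)
  have "Ez P Q R z (Suc n) (\<lambda>xs. real (visits x xs)^2) = ?a + 2 * ?a * Top P Q R ?e z + Top P Q R ?h z"
    by (rule h_rec)
  also have "\<dots> \<le> ?a + 2 * ?a * G + (1 + 2 * G) * Top P Q R ?e z"
  proof -
    have "2 * ?a * Top P Q R ?e z \<le> 2 * ?a * G" by (rule mult_left_mono[OF te]) (simp add: a0)
    moreover have "Top P Q R ?h z \<le> (1 + 2 * G) * Top P Q R ?e z" using th by (simp only: Top_scale)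
    ultimately show ?thesis by linarith
  qed
  also have "\<dots> = (1 + 2 * G) * (?a + Top P Q R ?e z)" by (simp add: algebra_simps)
  also have "\<dots> = (1 + 2 * G) * Ez P Q R z (Suc n) (\<lambda>xs. real (visits x xs))" by (simp add: e_rec)
  finally show ?case .
qed

lemma tanaka:
  assumes mm_eq: "\<And>n. mm n = P n *v mm (n + 1) + R n *v mm n + Q n *v mm (n - 1)"
    and dl: "Tpow P Q R L (\<lambda>w. \<bar>mmv mm w - mmv mm x\<bar>) x \<ge> \<delta>"
  shows "\<delta> * Ez P Q R z n (\<lambda>xs. real (visits x xs))
     \<le> (\<Sum>j<L. Tpow P Q R (n + j) (\<lambda>w. \<bar>mmv mm w - mmv mm x\<bar>) z - Tpow P Q R j (\<lambda>w. \<bar>mmv mm w - mmv mm x\<bar>) z)"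
proof (induction n arbitrary: z)
  case 0 then show ?case by (simp add: Ez_0 visits_def)
next
  case (Suc n)
  define f where "f = (\<lambda>w. \<bar>mmv mm w - mmv mm x\<bar>)"
  let ?e = "\<lambda>u. Ez P Q R u n (\<lambda>xs. real (visits x xs))"
  define Dn where "Dn = (\<lambda>u. \<Sum>j<L. Tpow P Q R (n + j) f u - Tpow P Q R j f u)"
  have IH: "\<delta> * ?e u \<le> Dn u" for u using Suc.IH[of u] unfolding Dn_def f_def .
  have TD: "Top P Q R Dn z = (\<Sum>j<L. Tpow P Q R (Suc (n + j)) f z - Tpow P Q R (Suc j) f z)"
    unfolding Dn_def by (simp add: Top_sum Top_diff)
  have tel: "(\<Sum>j<L. Tpow P Q R (Suc n + j) f z - Tpow P Q R j f z) = Top P Q R Dn z + (Tpow P Q R L f z - f z)"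
  proof -
    have "(\<Sum>j<L. Tpow P Q R (Suc n + j) f z - Tpow P Q R j f z)
        = (\<Sum>j<L. Tpow P Q R (Suc (n + j)) f z - Tpow P Q R (Suc j) f z) + (\<Sum>j<L. Tpow P Q R (Suc j) f z - Tpow P Q R j f z)"
      by (simp add: sum.distrib[symmetric])
    also have "(\<Sum>j<L. Tpow P Q R (Suc j) f z - Tpow P Q R j f z) = Tpow P Q R L f z - f z"
      by (subst sum_lessThan_telescope) simp
    finally show ?thesis using TD by simp
  qed
  have key: "\<delta> * ind x z \<le> Tpow P Q R L f z - f z"
  proof (cases "z = x")
    case True
    then show ?thesis using dl unfolding f_def ind_def by simp
  next
    case False
    have "Tpow P Q R 0 f z \<le> Tpow P Q R (0 + L) f z" unfolding f_def by (rule Tpow_time_mono[OF mm_eq])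
    then show ?thesis using False unfolding ind_def by simp
  qed
  have "\<delta> * Ez P Q R z (Suc n) (\<lambda>xs. real (visits x xs)) = \<delta> * ind x z + Top P Q R (\<lambda>u. \<delta> * ?e u) z"
    by (simp add: e_rec Top_scale algebra_simps)
  also have "\<dots> \<le> \<delta> * ind x z + Top P Q R Dn z"
    using Top_mono[of "\<lambda>u. \<delta> * ?e u" Dn z] IH by simp
  also have "\<dots> \<le> (\<Sum>j<L. Tpow P Q R (Suc n + j) f z - Tpow P Q R j f z)"
    using tel key by simp
  finally show ?case unfolding f_def .
qed

lemma Dsum_bound:
  assumes mm_eq: "\<And>n. mm n = P n *v mm (n + 1) + R n *v mm n + Q n *v mm (n - 1)"
    and lip: "\<And>n' n'' i' i''. \<bar>n' - n''\<bar> \<le> 1 \<Longrightarrow> \<bar>mm n' $ i' - mm n'' $ i''\<bar> \<le> K"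
    and Kpos: "K > 0"
  shows "(\<Sum>j<L. Tpow P Q R (n + j) (\<lambda>w. \<bar>mmv mm w - c\<bar>) z - Tpow P Q R j (\<lambda>w. \<bar>mmv mm w - c\<bar>) z)
     \<le> real L * (2 * K * sqrt (real (n + L)))"
proof -
  let ?f = "\<lambda>w. \<bar>mmv mm w - c\<bar>"
  let ?g = "\<lambda>w. \<bar>mmv mm w - mmv mm z\<bar>"
  let ?d = "\<bar>mmv mm z - c\<bar>"
  have up: "Tpow P Q R a ?f z \<le> K * sqrt (real a) + ?d" for a
  proof -
    have "Tpow P Q R a ?f z \<le> Tpow P Q R a (\<lambda>w. ?g w + ?d) z"
      by (rule Tpow_mono) (rule abs_triangle_ineq[THEN order_trans[rotated]], simp add: abs_triangle_ineq4 order_trans[OF _ abs_triangle_ineq])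
    also have "\<dots> = Tpow P Q R a ?g z + ?d" by (simp add: Tpow_add_fun)
    finally show ?thesis using Tpow_absdev[OF mm_eq lip Kpos, of a z] by linarith
  qed
  have lo: "Tpow P Q R b ?f z \<ge> ?d - K * sqrt (real b)" for b
  proof -
    have "Tpow P Q R b (\<lambda>w. ?d - ?g w) z \<le> Tpow P Q R b ?f z"
      by (rule Tpow_mono) (smt (verit) abs_triangle_ineq4)
    moreover have "Tpow P Q R b (\<lambda>w. ?d - ?g w) z = ?d - Tpow P Q R b ?g z" by (simp add: Tpow_diff)
    ultimately show ?thesis using Tpow_absdev[OF mm_eq lip Kpos, of b z] by linarith
  qed
  have "(\<Sum>j<L. Tpow P Q R (n + j) ?f z - Tpow P Q R j ?f z) \<le> real (card {..<L}) * (2 * K * sqrt (real (n + L)))"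
  proof (rule sum_bounded_above)
    fix j assume "j \<in> {..<L}"
    then have j: "j < L" by simp
    have s1: "sqrt (real (n + j)) \<le> sqrt (real (n + L))" using j by simp
    have s2: "sqrt (real j) \<le> sqrt (real (n + L))" using j by simp
    have "Tpow P Q R (n + j) ?f z - Tpow P Q R j ?f z \<le> K * sqrt (real (n + j)) + K * sqrt (real j)"
      using up[of "n + j"] lo[of j] by linarith
    also have "\<dots> \<le> 2 * K * sqrt (real (n + L))"
      using mult_left_mono[OF s1, of K] mult_left_mono[OF s2, of K] Kpos by linarith
    finally show "Tpow P Q R (n + j) ?f z - Tpow P Q R j ?f z \<le> 2 * K * sqrt (real (n + L))" .
  qed
  then show ?thesis by simp
qed

end


context strip
begin

lemma rho_c0:
  fixes \<rho> mm :: "int \<Rightarrow> real^'m" and \<zeta>m :: "'m env"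
  assumes zm_stoch: "\<And>n. stochastic (\<zeta>m n)"
    and rho_pos: "\<And>n i. \<rho> n $ i > 0"
    and rho_bdd: "\<exists>B. \<forall>n i. \<rho> n $ i \<le> B"
    and rho_norm: "\<And>n. (\<rho> n v* P n) \<bullet> (mm (n + 1) - \<zeta>m (n + 1) *v mm n) = 1 / (2 * real CARD('m))"
  shows "\<exists>c0>0. \<forall>n. \<exists>i j. mm (n + 1) $ i - mm n $ j \<ge> c0"
proof -
  obtain B where B: "\<And>n i. \<rho> n $ i \<le> B" using rho_bdd by blast
  obtain i0 :: 'm where True by blast
  have Bpos: "B > 0" using B[of 0 i0] rho_pos[of 0 i0] by linarith
  define m where "m = real CARD('m)"
  have mpos: "m \<ge> 1" unfolding m_def by simp
  define c0 where "c0 = 1 / (4 * m^3 * B)"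
  have c0pos: "c0 > 0" unfolding c0_def using Bpos mpos by simp
  have "\<forall>n. \<exists>i j. mm (n + 1) $ i - mm n $ j \<ge> c0"
  proof (rule ccontr)
    assume "\<not> ?thesis"
    then obtain n where lt: "\<And>i j. mm (n + 1) $ i - mm n $ j < c0" by (meson not_le)
    define w where "w = \<rho> n v* P n"
    define d where "d = mm (n + 1) - \<zeta>m (n + 1) *v mm n"
    have w_eq: "w $ i = (\<Sum>l\<in>UNIV. \<rho> n $ l * P n $ l $ i)" for i
      unfolding w_def by (simp add: vector_matrix_mult_def)
    have w0: "w $ i \<ge> 0" for i
      unfolding w_eq using rho_pos nonneg by (intro sum_nonneg) (simp add: less_imp_le)
    have wB: "w $ i \<le> m * B" for i
    proof -
      have "w $ i \<le> (\<Sum>l\<in>(UNIV::'m set). B)"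
        unfolding w_eq
      proof (rule sum_mono)
        fix l
        have "\<rho> n $ l * P n $ l $ i \<le> B * 1"
          using B[of n l] entry_le1[of n l i] rho_pos[of n l] nonneg[of n l i]
          by (intro mult_mono) (auto simp: less_imp_le)
        then show "\<rho> n $ l * P n $ l $ i \<le> B" by simp
      qed
      then show ?thesis unfolding m_def by simp
    qed
    have zrow: "(\<Sum>j\<in>UNIV. \<zeta>m (n + 1) $ i $ j) = 1" for i
    proof -
      have "(\<zeta>m (n + 1) *v one_vec) $ i = 1" using zm_stoch[of "n + 1"] unfolding stochastic_def by simp
      then show ?thesis by (simp add: mv_entry)
    qed
    have zn: "\<zeta>m (n + 1) $ i $ j \<ge> 0" for i j using zm_stoch[of "n + 1"] unfolding stochastic_def by simp
    have dle: "d $ i \<le> c0" for i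
    proof -
      have "d $ i = mm (n + 1) $ i * (\<Sum>j\<in>UNIV. \<zeta>m (n + 1) $ i $ j) - (\<Sum>j\<in>UNIV. \<zeta>m (n + 1) $ i $ j * mm n $ j)"
        unfolding d_def zrow by (simp add: mv_entry)
      also have "\<dots> = (\<Sum>j\<in>UNIV. \<zeta>m (n + 1) $ i $ j * (mm (n + 1) $ i - mm n $ j))"
        by (simp add: sum_distrib_left sum_subtractf algebra_simps)
      also have "\<dots> \<le> (\<Sum>j\<in>UNIV. \<zeta>m (n + 1) $ i $ j * c0)"
        using lt zn by (intro sum_mono mult_left_mono) (auto simp: less_imp_le)
      also have "\<dots> = c0" by (simp add: sum_distrib_right[symmetric] zrow)
      finally show ?thesis .
    qed
    have "w \<bullet> d = (\<Sum>i\<in>UNIV. w $ i * d $ i)" by (simp add: inner_vec_def)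
    also have "\<dots> \<le> (\<Sum>i\<in>(UNIV::'m set). (m * B) * c0)"
    proof (rule sum_mono)
      fix i
      have "w $ i * d $ i \<le> w $ i * c0" by (rule mult_left_mono[OF dle w0])
      also have "\<dots> \<le> (m * B) * c0" by (rule mult_right_mono[OF wB less_imp_le[OF c0pos]])
      finally show "w $ i * d $ i \<le> (m * B) * c0" .
    qed
    also have "\<dots> = m * (m * B) * c0" unfolding m_def by simp
    also have "\<dots> = 1 / (4 * m)" unfolding c0_def using Bpos mpos by (simp add: power3_eq_cube field_simps)
    also have "\<dots> < 1 / (2 * m)" using mpos by (simp add: field_simps)
    finally have "w \<bullet> d < 1 / (2 * m)" .
    with rho_norm[of n] show False unfolding w_def d_def m_def by simp
  qed
  with c0pos show ?thesis by blast
qed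


lemma delta_bound:
  assumes mm_eq: "\<And>n. mm n = P n *v mm (n + 1) + R n *v mm n + Q n *v mm (n - 1)"
    and hc0: "\<And>n. \<exists>i j. mm (n + 1) $ i - mm n $ j \<ge> c0"
    and up: "\<And>k i j. \<exists>s<S. Tpow P Q R (Suc s) (ind (k + 1, j)) (k, i) \<ge> p"
    and down: "\<And>k i j. \<exists>s<S. Tpow P Q R (Suc s) (ind (k - 1, j)) (k, i) \<ge> p"
    and ppos: "p > 0"
  shows "Tpow P Q R (2 * S) (\<lambda>w. \<bar>mmv mm w - mmv mm x\<bar>) x \<ge> c0 / 2 * min p (p * p)"
proof -
  obtain k y where x: "x = (k, y)" by (cases x)
  define f where "f = (\<lambda>w. \<bar>mmv mm w - mmv mm x\<bar>)"
  have f0: "f u \<ge> 0" for u unfolding f_def by simp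
  have gen: "Tpow P Q R t f x \<ge> f w * Tpow P Q R t (ind w) x" for t w
  proof -
    have "Tpow P Q R t (\<lambda>u. f w * ind w u) x \<le> Tpow P Q R t f x"
      by (rule Tpow_mono) (simp add: ind_def f0)
    then show ?thesis by (simp add: Tpow_scale)
  qed
  have mono: "Tpow P Q R t f x \<le> Tpow P Q R (2 * S) f x" if "t \<le> 2 * S" for t
  proof -
    have "Tpow P Q R t f x \<le> Tpow P Q R (t + (2 * S - t)) f x" unfolding f_def by (rule Tpow_time_mono[OF mm_eq])
    then show ?thesis using that by simp
  qed
  have mp: "min p (p * p) \<le> p" "min p (p * p) \<le> p * p" by simp_all
  obtain i j where ij: "mm (k + 1) $ i - mm k $ j \<ge> c0" using hc0 by blast
  show ?thesis
  proof (cases "\<bar>mm (k + 1) $ i - mm k $ y\<bar> \<ge> c0 / 2")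
    case True
    obtain s where s: "s < S" "Tpow P Q R (Suc s) (ind (k + 1, i)) (k, y) \<ge> p" using up by blast
    have fw: "f (k + 1, i) \<ge> c0 / 2" using True unfolding f_def mmv_def x by simp
    have "c0 / 2 * min p (p * p) \<le> f (k + 1, i) * p"
      using fw mp(1) ppos f0[of "(k + 1, i)"] by (intro mult_mono) auto
    also have "\<dots> \<le> f (k + 1, i) * Tpow P Q R (Suc s) (ind (k + 1, i)) x"
      using s(2) x f0 by (simp add: mult_left_mono)
    also have "\<dots> \<le> Tpow P Q R (Suc s) f x" by (rule gen)
    also have "\<dots> \<le> Tpow P Q R (2 * S) f x" using s(1) by (intro mono) simp
    finally show ?thesis unfolding f_def .
  next
    case False
    then have fB: "\<bar>mm k $ j - mm k $ y\<bar> \<ge> c0 / 2" using ij by linarith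
    obtain s1 where s1: "s1 < S" "Tpow P Q R (Suc s1) (ind (k + 1, y)) (k, y) \<ge> p" using up by blast
    obtain s2 where s2: "s2 < S" "Tpow P Q R (Suc s2) (ind (k + 1 - 1, j)) (k + 1, y) \<ge> p" using down by blast
    have s2': "Tpow P Q R (Suc s2) (ind (k, j)) (k + 1, y) \<ge> p" using s2(2) by simp
    have pw: "p * ind (k + 1, y) u \<le> Tpow P Q R (Suc s2) (ind (k, j)) u" for u
    proof (cases "u = (k + 1, y)")
      case True then show ?thesis using s2' by (simp add: ind_def)
    next
      case False
      have "0 \<le> Tpow P Q R (Suc s2) (ind (k, j)) u" by (rule Tpow_nonneg) (rule ind_nonneg)
      then show ?thesis using False by (simp only: ind_def) simp
    qed
    have "p * p \<le> p * Tpow P Q R (Suc s1) (ind (k + 1, y)) x"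
      using s1(2) x ppos by (simp add: mult_left_mono)
    also have "\<dots> = Tpow P Q R (Suc s1) (\<lambda>u. p * ind (k + 1, y) u) x" by (simp only: Tpow_scale)
    also have "\<dots> \<le> Tpow P Q R (Suc s1) (Tpow P Q R (Suc s2) (ind (k, j))) x"
      by (rule Tpow_mono) (rule pw)
    also have "\<dots> = Tpow P Q R (Suc s1 + Suc s2) (ind (k, j)) x" by (simp only: Tpow_add)
    finally have reach: "p * p \<le> Tpow P Q R (Suc s1 + Suc s2) (ind (k, j)) x" .
    have fw: "f (k, j) \<ge> c0 / 2" using fB unfolding f_def mmv_def x by simp
    have "c0 / 2 * min p (p * p) \<le> f (k, j) * (p * p)"
      using fw mp(2) ppos f0[of "(k, j)"] by (intro mult_mono) auto
    also have "\<dots> \<le> f (k, j) * Tpow P Q R (Suc s1 + Suc s2) (ind (k, j)) x"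
      using reach f0 by (simp add: mult_left_mono)
    also have "\<dots> \<le> Tpow P Q R (Suc s1 + Suc s2) f x" by (rule gen)
    also have "\<dots> \<le> Tpow P Q R (2 * S) f x" using s1(1) s2(1) by (intro mono) simp
    finally show ?thesis unfolding f_def .
  qed
qed

end


theorem lemma6p3:
  fixes P Q R \<zeta> \<zeta>m :: "'m::finite env"
    and mm \<rho> :: "int \<Rightarrow> real^'m"
    and a \<epsilon>b C_P K' :: real and k0 :: nat
  assumes nonneg: "\<And>n i j. P n $ i $ j \<ge> 0 \<and> Q n $ i $ j \<ge> 0 \<and> R n $ i $ j \<ge> 0"
    and rowsum: "\<And>n. (P n + Q n + R n) *v one_vec = one_vec"
    (* ellipticity *)
    and eps_pos: "\<epsilon>b > 0"
    and ell_R: "\<And>n. mnorm (mpow (R n) k0) \<le> 1 - \<epsilon>b"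
    and ell_P: "\<And>n i j. (matrix_inv (mat 1 - R n) ** P n) $ i $ j \<ge> \<epsilon>b"
    and ell_Q: "\<And>n i j. (matrix_inv (mat 1 - R n) ** Q n) $ i $ j \<ge> \<epsilon>b"
    (* bounded potential *)
    and zeta_lim: "\<And>S n. (\<And>a. stochastic (S a)) \<Longrightarrow>
                     ((\<lambda>a. psi_seq P Q R S a (nat (n - a))) \<longlongrightarrow> \<zeta> n) at_bot"
    and pot_pos: "\<And>n::int. n \<ge> 1 \<Longrightarrow> \<bar>ln (mnorm (rprod (Amat Q R \<zeta>) n (nat n)))\<bar> \<le> C_P"
    and pot_neg: "\<And>n::int. n \<le> -1 \<Longrightarrow> \<bar>ln (mnorm (rprod (Amat Q R \<zeta>) 0 (nat (- n))))\<bar> \<le> C_P"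
    (* the vectors \<mm>_n *)
    and mm_eq: "\<And>n. mm n = P n *v mm (n + 1) + R n *v mm n + Q n *v mm (n - 1)"
    and mm_lip: "\<And>n' n'' i' i''. \<bar>n' - n''\<bar> \<le> 1 \<Longrightarrow> \<bar>mm n' $ i' - mm n'' $ i''\<bar> \<le> K'"
    and mm_top: "((\<lambda>n. (\<Sum>j\<in>UNIV. mm n $ j) / real_of_int n) \<longlongrightarrow> real CARD('m)) at_top"
    and mm_bot: "((\<lambda>n. (\<Sum>j\<in>UNIV. mm n $ j) / real_of_int n) \<longlongrightarrow> real CARD('m)) at_bot"
    (* \<zeta>^- *)
    and zm_stoch: "\<And>n. stochastic (\<zeta>m n)"
    and zm_eq: "\<And>n. \<zeta>m n = matrix_inv (mat 1 - R n - P n ** \<zeta>m (n + 1)) ** Q n"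
    and zm_unique: "\<And>Z. (\<And>n. stochastic (Z n)) \<Longrightarrow>
                     (\<And>n. Z n = matrix_inv (mat 1 - R n - P n ** Z (n + 1)) ** Q n) \<Longrightarrow> Z = \<zeta>m"
    (* the row vectors \<rho>_n *)
    and rho_pos: "\<And>n i. \<rho> n $ i > 0"
    and rho_bdd: "\<exists>B. \<forall>n i. \<rho> n $ i \<le> B"
    and rho_eq: "\<And>n. \<rho> n = \<rho> (n - 1) v* P (n - 1) + \<rho> n v* R n + \<rho> (n + 1) v* Q (n + 1)"
    and rho_alpha: "\<And>n. \<rho> n = \<rho> (n + 1) v* alpha_mat Q R \<zeta> n"
    and rho_norm: "\<And>n. (\<rho> n v* P n) \<bullet> (mm (n + 1) - \<zeta>m (n + 1) *v mm n) = 1 / (2 * real CARD('m))"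
    and a_top: "((\<lambda>N. partial_sum (\<lambda>n. \<rho> n \<bullet> one_vec) N / real_of_int \<bar>N\<bar>) \<longlongrightarrow> a) at_top"
    and a_bot: "((\<lambda>N. partial_sum (\<lambda>n. \<rho> n \<bullet> one_vec) N / real_of_int \<bar>N\<bar>) \<longlongrightarrow> a) at_bot"
    and K_pos: "K > 0"
  shows "\<forall>e>0. \<exists>M. \<forall>N::nat. \<forall>z::int \<times> 'm. \<forall>k::int. \<forall>y::'m.
           N \<ge> 1 \<longrightarrow> real_of_int \<bar>k\<bar> \<le> K * sqrt (real N) \<longrightarrow>
           exp_visits P Q R z N (k, y)
             (\<lambda>v. if v / sqrt (real N) > M then v / sqrt (real N) else 0) \<le> e"
proof -
  interpret strip P Q R using nonneg rowsum by unfold_locales auto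
  define K1 where "K1 = K' + 1"
  have K'0: "K' \<ge> 0" using mm_lip[of 0 0 undefined undefined] by simp
  have K1pos: "K1 > 0" unfolding K1_def using K'0 by simp
  have lip1: "\<bar>mm n' $ i' - mm n'' $ i''\<bar> \<le> K1" if "\<bar>n' - n''\<bar> \<le> 1" for n' n'' i' i''
    using mm_lip[OF that, of i' i''] unfolding K1_def by linarith
  have rk: "(mpow (R n) k0 *v one_vec) $ i \<le> 1 - \<epsilon>b" for n i
  proof -
    have "(mpow (R n) k0 *v one_vec) $ i \<le> \<bar>(mpow (R n) k0 *v one_vec) $ i\<bar>" by simp
    also have "\<dots> \<le> vnorm (mpow (R n) k0 *v one_vec)" by (rule abs_le_vnorm)
    also have "\<dots> \<le> mnorm (mpow (R n) k0)" by (rule vnorm_le_mnorm[OF vnorm_one])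
    also have "\<dots> \<le> 1 - \<epsilon>b" by (rule ell_R)
    finally show ?thesis .
  qed
  obtain q where q: "(1 - \<epsilon>b) ^ q < \<epsilon>b / 2"
    using real_arch_pow_inv[of "\<epsilon>b / 2" "1 - \<epsilon>b"] eps_pos by auto
  define S where "S = q * k0"
  have nnR: "nnm (R n)" and nnP: "nnm (P n)" and nnQ: "nnm (Q n)" for n
    using nonneg unfolding nnm_def by auto
  have rsQ: "(Q n + P n + R n) *v one_vec = one_vec" for n
    using rowsum[of n] by (simp add: add.commute add.left_commute)
  have eP: "\<exists>s<S. (mpow (R n) s ** P n) $ i $ j \<ge> \<epsilon>b / (2 * real S)" for n i j
    unfolding S_def by (rule ellip_level[OF nnR nnP nnQ rowsum eps_pos rk ell_P ell_Q q])
  have eQ: "\<exists>s<S. (mpow (R n) s ** Q n) $ i $ j \<ge> \<epsilon>b / (2 * real S)" for n i j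
    unfolding S_def by (rule ellip_level[OF nnR nnQ nnP rsQ eps_pos rk ell_Q ell_P q])
  obtain i00 :: 'm where True by blast
  have Spos: "S > 0" using eP[of 0 i00 i00] by auto
  define p where "p = \<epsilon>b / (2 * real S)"
  have ppos: "p > 0" unfolding p_def using Spos eps_pos by simp
  have up: "\<exists>s<S. Tpow P Q R (Suc s) (ind (k + 1, j)) (k, i) \<ge> p" for k i j
    using eP[of k i j] reach_up[where k=k and j=j and i=i] unfolding p_def by (meson order_trans)
  have down: "\<exists>s<S. Tpow P Q R (Suc s) (ind (k - 1, j)) (k, i) \<ge> p" for k i j
    using eQ[of k i j] reach_down[where k=k and j=j and i=i] unfolding p_def by (meson order_trans)
  obtain c0 where c0: "c0 > 0" and hc0: "\<And>n. \<exists>i j. mm (n + 1) $ i - mm n $ j \<ge> c0"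
    using rho_c0[OF zm_stoch rho_pos rho_bdd rho_norm] by blast
  define \<delta> where "\<delta> = c0 / 2 * min p (p * p)"
  have dpos: "\<delta> > 0" unfolding \<delta>_def using c0 ppos by simp
  define L where "L = 2 * S"
  have dl: "Tpow P Q R L (\<lambda>w. \<bar>mmv mm w - mmv mm x\<bar>) x \<ge> \<delta>" for x
    unfolding L_def \<delta>_def by (rule delta_bound[OF mm_eq hc0 up down ppos])
  define C1 where "C1 = real L * (2 * K1 * sqrt (1 + real L)) / \<delta>"
  have C1nn: "C1 \<ge> 0" unfolding C1_def using dpos K1pos by simp
  have ebound: "Ez P Q R z n (\<lambda>xs. real (visits x xs)) \<le> C1 * sqrt (real n)" for z x n
  proof (cases "n = 0")
    case True then show ?thesis by (simp add: Ez_0 visits_def)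
  next
    case False
    have "\<delta> * Ez P Q R z n (\<lambda>xs. real (visits x xs)) \<le> real L * (2 * K1 * sqrt (real (n + L)))"
    proof -
      have t1: "\<delta> * Ez P Q R z n (\<lambda>xs. real (visits x xs))
         \<le> (\<Sum>j<L. Tpow P Q R (n + j) (\<lambda>w. \<bar>mmv mm w - mmv mm x\<bar>) z - Tpow P Q R j (\<lambda>w. \<bar>mmv mm w - mmv mm x\<bar>) z)"
        by (rule tanaka[OF mm_eq dl])
      have t2: "(\<Sum>j<L. Tpow P Q R (n + j) (\<lambda>w. \<bar>mmv mm w - mmv mm x\<bar>) z - Tpow P Q R j (\<lambda>w. \<bar>mmv mm w - mmv mm x\<bar>) z)
         \<le> real L * (2 * K1 * sqrt (real (n + L)))"
        by (rule Dsum_bound[OF mm_eq _ K1pos]) (rule lip1)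
      from t1 t2 show ?thesis by linarith
    qed
    also have "\<dots> \<le> real L * (2 * K1 * (sqrt (1 + real L) * sqrt (real n)))"
    proof -
      have "real L * 1 \<le> real L * real n" using False by (intro mult_left_mono) auto
      then have "real (n + L) \<le> (1 + real L) * real n" by (simp add: algebra_simps)
      then have "sqrt (real (n + L)) \<le> sqrt (1 + real L) * sqrt (real n)"
        by (metis real_sqrt_le_mono real_sqrt_mult)
      then show ?thesis using K1pos by (intro mult_left_mono) auto
    qed
    also have "\<dots> = \<delta> * (C1 * sqrt (real n))" unfolding C1_def using dpos by simp
    finally show ?thesis using dpos by simp
  qed
  define C2 where "C2 = C1 + 2 * C1^2"
  show ?thesis
  proof (intro allI impI)
    fix e :: real assume epos: "e > 0"
    define M where "M = C2 / e + 1"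
    have C2nn: "C2 \<ge> 0" unfolding C2_def using C1nn by simp
    have "C2 / e \<ge> 0" using C2nn epos by simp
    then have Mpos: "M > 0" unfolding M_def by linarith
    show "\<exists>M. \<forall>N::nat. \<forall>z::int \<times> 'm. \<forall>k::int. \<forall>y::'m.
           N \<ge> 1 \<longrightarrow> real_of_int \<bar>k\<bar> \<le> K * sqrt (real N) \<longrightarrow>
           exp_visits P Q R z N (k, y)
             (\<lambda>v. if v / sqrt (real N) > M then v / sqrt (real N) else 0) \<le> e"
    proof (intro exI allI impI)
      fix N :: nat and z :: "int \<times> 'm" and k :: int and y :: 'm
      assume N1: "N \<ge> 1"
      define x where "x = (k, y)"
      define G where "G = C1 * sqrt (real N)"
      have G: "Ez P Q R u m (\<lambda>xs. real (visits x xs)) \<le> G" if "m \<le> N" for m u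
      proof -
        have "sqrt (real m) \<le> sqrt (real N)" using that by simp
        then have "C1 * sqrt (real m) \<le> C1 * sqrt (real N)" using C1nn by (rule mult_left_mono)
        then show ?thesis using ebound[where z=u and x=x and n=m] unfolding G_def by linarith
      qed
      have sN: "sqrt (real N) \<le> real N"
      proof -
        have "N * 1 \<le> N * N" using N1 by (intro mult_le_mono2) simp
        then have "real N \<le> (real N)^2" by (simp add: power2_eq_square flip: of_nat_mult)
        then show ?thesis by (simp add: real_sqrt_le_iff')
      qed
      have hN: "Ez P Q R z N (\<lambda>xs. real (visits x xs)^2) \<le> C2 * real N"
      proof -
        have G0: "G \<ge> 0" unfolding G_def using C1nn by simp
        have "Ez P Q R z N (\<lambda>xs. real (visits x xs)^2) \<le> (1 + 2 * G) * Ez P Q R z N (\<lambda>xs. real (visits x xs))"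
          using h_bound[where N=N and x=x and G=G and z=z and n=N] G by blast
        also have "\<dots> \<le> (1 + 2 * G) * G" using G[of N z] G0 by (intro mult_left_mono) auto
        also have "\<dots> = C1 * sqrt (real N) + 2 * C1^2 * real N"
          unfolding G_def by (simp add: power2_eq_square algebra_simps)
        also have "\<dots> \<le> C1 * real N + 2 * C1^2 * real N" using sN C1nn by (simp add: mult_left_mono)
        finally show ?thesis unfolding C2_def by (simp add: algebra_simps)
      qed
      have Npos: "real N > 0" using N1 by simp
      have gle: "(if v / sqrt (real N) > M then v / sqrt (real N) else 0) \<le> (1 / (real N * M)) * v^2"
        if v0: "v \<ge> 0" for v :: real
      proof (cases "v / sqrt (real N) > M")
        case True
        define a where "a = v / sqrt (real N)"
        have aM: "a > M" using True unfolding a_def .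
        have "a = a * 1" by simp
        also have "\<dots> \<le> a * (a / M)" using aM Mpos by (intro mult_left_mono) auto
        also have "\<dots> = a^2 / M" by (simp add: power2_eq_square)
        also have "a^2 = v^2 / real N" unfolding a_def using Npos by (simp add: power_divide)
        finally show ?thesis using True unfolding a_def by simp
      next
        case False then show ?thesis using Npos Mpos by simp
      qed
      have "exp_visits P Q R z N (k, y) (\<lambda>v. if v / sqrt (real N) > M then v / sqrt (real N) else 0)
          = Ez P Q R z N (\<lambda>xs. (\<lambda>v. if v / sqrt (real N) > M then v / sqrt (real N) else 0) (real (visits x xs)))"
        unfolding exp_visits_def Ez_def x_def by simp
      also have "\<dots> \<le> Ez P Q R z N (\<lambda>xs. (1 / (real N * M)) * real (visits x xs)^2)"
        by (rule Ez_mono) (rule gle, simp)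
      also have "\<dots> = (1 / (real N * M)) * Ez P Q R z N (\<lambda>xs. real (visits x xs)^2)" by (rule Ez_scale)
      also have "\<dots> \<le> (1 / (real N * M)) * (C2 * real N)"
        using hN Npos Mpos by (intro mult_left_mono) auto
      also have "\<dots> = C2 / M" using Npos by simp
      also have "\<dots> \<le> e"
        using Mpos epos unfolding M_def by (simp add: field_simps)
      finally show "exp_visits P Q R z N (k, y) (\<lambda>v. if v / sqrt (real N) > M then v / sqrt (real N) else 0) \<le> e" .
    qed
  qed
qed


end
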